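(* Assume $\frac\pi2<\omega<\pi$ and $q>0$. For every $(a,f,g)\in\mathcal C$ there is a function $\tilde f$ with $0\le\tilde f(r)\le\frac\pi2$ for all $r\ge0$ such that $(a,\tilde f,g)\in\mathcal C$ and $L(a,\tilde f,g)\le L(a,f,g)$. Consequently, in minimizing $L$ over $\mathcal C$ one may restrict to functions $f$ with $0\le f\le\frac\pi2$.
   Context: Fix $\kappa>0$, $\omega\in(\frac\pi2,\pi)$, $q>0$; $'=d/dr$. Define $\mathcal E_1=2\big(2(a')^2+\frac{(a^2-1)^2}{r^2}\big)+\frac12\big(r^2(f')^2+2a^2\sin^2f\big)+2\kappa a^2\sin^2f\big(2(f')^2+\frac{a^2\sin^2f}{r^2}\big)$, $\mathcal E_2=r^2(g')^2+2a^2g^2$, $L(a,f,g)=\int_0^\infty(\mathcal E_1-\mathcal E_2)\,dr$, $E(a,f,g)=\int_0^\infty(\mathcal E_1+\mathcal E_2)\,dr$, and for functions $a,G$, $E_2(a,G)=\int_0^\infty(r^2(G')^2+2a^2G^2)\,dr$. The admissible set $\mathcal A$ consists of triples $(a,f,g)$ of continuous functions on $[0,\infty)$ that are absolutely continuous on every compact subinterval of $(0,\infty)$, satisfy $a(0)=1$, $\lim_{r\to\infty}a(r)=0$, $f(0)=0$, $\lim_{r\to\infty}f(r)=\pi-\omega$, $\lim_{r\to\infty}g(r)=q$, and have $E(a,f,g)<\infty$. The constrained class $\mathcal C$ consists of those $(a,f,g)\in\mathcal A$ such that $\int_0^\infty(r^2g'G'+2a^2gG)\,dr=0$ for every function $G$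 on $(0,\infty)$, absolutely continuous on compact subintervals of $(0,\infty)$, with $G(r)\to0$ as $r\to\infty$ and $E_2(a,G)<\infty$. *)

theory Defs
  imports "HOL-Analysis.Analysis"
begin

definition abs_cont_on :: "real set \<Rightarrow> (real \<Rightarrow> real) \<Rightarrow> bool" where
  "abs_cont_on S u \<longleftrightarrow>
     (\<forall>\<epsilon>>0. \<exists>\<delta>>0. \<forall>(n::nat) (x::nat \<Rightarrow> real) (y::nat \<Rightarrow> real).
        (\<forall>i<n. x i \<le> y i \<and> {x i..y i} \<subseteq> S) \<and>
        (\<forall>i<n. \<forall>j<n. i \<noteq> j \<longrightarrow> {x i<..<y i} \<inter> {x j<..<y j} = {}) \<and>
        (\<Sum>i<n. y i - x i) < \<delta>
        \<longrightarrow> (\<Sum>i<n. \<bar>u (y i) - u (x i)\<bar>) < \<epsilon>)"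

definition loc_abs_cont :: "(real \<Rightarrow> real) \<Rightarrow> bool" where
  "loc_abs_cont u \<longleftrightarrow> (\<forall>c d. 0 < c \<longrightarrow> c \<le> d \<longrightarrow> abs_cont_on {c..d} u)"

(* energy densities; ' is d/dr, realised by deriv (defined a.e. for AC functions) *)
definition E1dens :: "real \<Rightarrow> (real \<Rightarrow> real) \<Rightarrow> (real \<Rightarrow> real) \<Rightarrow> real \<Rightarrow> real" where
  "E1dens \<kappa> a f r =
     2 * (2 * (deriv a r)\<^sup>2 + ((a r)\<^sup>2 - 1)\<^sup>2 / r\<^sup>2)
     + 1/2 * (r\<^sup>2 * (deriv f r)\<^sup>2 + 2 * (a r)\<^sup>2 * (sin (f r))\<^sup>2)
     + 2 * \<kappa> * (a r)\<^sup>2 * (sin (f r))\<^sup>2 *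
         (2 * (deriv f r)\<^sup>2 + (a r)\<^sup>2 * (sin (f r))\<^sup>2 / r\<^sup>2)"

definition E2dens :: "(real \<Rightarrow> real) \<Rightarrow> (real \<Rightarrow> real) \<Rightarrow> real \<Rightarrow> real" where
  "E2dens a g r = r\<^sup>2 * (deriv g r)\<^sup>2 + 2 * (a r)\<^sup>2 * (g r)\<^sup>2"

definition Lfun :: "real \<Rightarrow> (real \<Rightarrow> real) \<Rightarrow> (real \<Rightarrow> real) \<Rightarrow> (real \<Rightarrow> real) \<Rightarrow> real" where
  "Lfun \<kappa> a f g = (LINT r:{0<..}|lebesgue. E1dens \<kappa> a f r - E2dens a g r)"

definition Efun :: "real \<Rightarrow> (real \<Rightarrow> real) \<Rightarrow> (real \<Rightarrow> real) \<Rightarrow> (real \<Rightarrow> real) \<Rightarrow> ennreal" where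
  "Efun \<kappa> a f g = (\<integral>\<^sup>+ r. ennreal (E1dens \<kappa> a f r + E2dens a g r) * indicator {0<..} r \<partial>lebesgue)"

definition E2fun :: "(real \<Rightarrow> real) \<Rightarrow> (real \<Rightarrow> real) \<Rightarrow> ennreal" where
  "E2fun a G = (\<integral>\<^sup>+ r. ennreal (E2dens a G r) * indicator {0<..} r \<partial>lebesgue)"

definition admissible :: "real \<Rightarrow> real \<Rightarrow> real \<Rightarrow> (real \<Rightarrow> real) \<Rightarrow> (real \<Rightarrow> real) \<Rightarrow> (real \<Rightarrow> real) \<Rightarrow> bool" where
  "admissible \<kappa> \<omega> q a f g \<longleftrightarrow>
     continuous_on {0..} a \<and> continuous_on {0..} f \<and> continuous_on {0..} g \<and>
     loc_abs_cont a \<and> loc_abs_cont f \<and> loc_abs_cont g \<and>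
     a 0 = 1 \<and> (a \<longlongrightarrow> 0) at_top \<and>
     f 0 = 0 \<and> (f \<longlongrightarrow> pi - \<omega>) at_top \<and>
     (g \<longlongrightarrow> q) at_top \<and>
     Efun \<kappa> a f g < \<infinity>"

definition constrained :: "real \<Rightarrow> real \<Rightarrow> real \<Rightarrow> (real \<Rightarrow> real) \<Rightarrow> (real \<Rightarrow> real) \<Rightarrow> (real \<Rightarrow> real) \<Rightarrow> bool" where
  "constrained \<kappa> \<omega> q a f g \<longleftrightarrow>
     admissible \<kappa> \<omega> q a f g \<and>
     (\<forall>G. loc_abs_cont G \<and> (G \<longlongrightarrow> 0) at_top \<and> E2fun a G < \<infinity> \<longrightarrow>
        (LINT r:{0<..}|lebesgue. r\<^sup>2 * deriv g r * deriv G r + 2 * (a r)\<^sup>2 * g r * G r) = 0)"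

end

theory Submission
  imports Defs
begin


lemma int_diff_abs_ge1: "(m::int) \<noteq> k \<Longrightarrow> \<bar>of_int m - of_int k\<bar> \<ge> (1::real)"
proof -
  assume "m \<noteq> k"
  then have "\<bar>m - k\<bar> \<ge> 1" by linarith
  then have "real_of_int \<bar>m - k\<bar> \<ge> 1" by linarith
  then show ?thesis by simp
qed

definition hh :: "real \<Rightarrow> real" where
  "hh x = \<bar>x - pi * of_int \<lfloor>x/pi + 1/2\<rfloor>\<bar>"

lemma hh_basic:
  fixes x :: real
  defines "m \<equiv> \<lfloor>x/pi + 1/2\<rfloor>"
  shows "- (pi/2) \<le> x - pi * of_int m" "x - pi * of_int m < pi/2"
proof -
  have a: "of_int m - 1/2 \<le> x/pi" "x/pi < of_int m + 1/2" unfolding m_def by linarith+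
  have p: "pi > 0" by simp
  have "(of_int m - 1/2) * pi \<le> x" using a(1) p by (simp add: pos_le_divide_eq)
  then show "- (pi/2) \<le> x - pi * of_int m" by (simp add: algebra_simps)
  have "x < (of_int m + 1/2) * pi" using a(2) p by (simp add: pos_divide_less_eq)
  then show "x - pi * of_int m < pi/2" by (simp add: algebra_simps)
qed

lemma hh_range: "0 \<le> hh x" "hh x \<le> pi/2"
  using hh_basic[of x] unfolding hh_def by arith+

lemma hh_min: "hh x \<le> \<bar>x - pi * of_int k\<bar>"
proof (cases "k = \<lfloor>x/pi + 1/2\<rfloor>")
  case True then show ?thesis by (simp add: hh_def)
next
  case False
  define m where "m = \<lfloor>x/pi + 1/2\<rfloor>"
  have b: "- (pi/2) \<le> x - pi * of_int m" "x - pi * of_int m < pi/2" using hh_basic[of x] m_def by auto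
  have "m \<noteq> k" using False m_def by simp
  then have "\<bar>of_int m - of_int k\<bar> \<ge> (1::real)" by (intro int_diff_abs_ge1)
  then have c: "pi * \<bar>of_int m - of_int k\<bar> \<ge> pi" by (simp add: mult_left_le)
  have "x - pi * of_int k = (x - pi * of_int m) + pi * (of_int m - of_int k)" by (simp add: algebra_simps)
  moreover have "\<bar>pi * (of_int m - of_int k)\<bar> = pi * \<bar>of_int m - of_int k\<bar>" by (simp add: abs_mult)
  ultimately have "\<bar>x - pi * of_int k\<bar> \<ge> pi * \<bar>of_int m - of_int k\<bar> - \<bar>x - pi * of_int m\<bar>"
    by linarith
  then show ?thesis using c b hh_range(2)[of x] by linarith
qed

lemma hh_eq: assumes "\<bar>x - pi * of_int k\<bar> \<le> pi/2" shows "hh x = \<bar>x - pi * of_int k\<bar>"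
proof -
  define m where "m = \<lfloor>x/pi + 1/2\<rfloor>"
  have hm: "hh x = \<bar>x - pi * of_int m\<bar>" by (simp add: hh_def m_def)
  show ?thesis
  proof (cases "k = m")
    case True then show ?thesis using hm by simp
  next
    case False
    have "m \<noteq> k" using False by simp
    then have "\<bar>of_int m - of_int k\<bar> \<ge> (1::real)" by (intro int_diff_abs_ge1)
    then have c: "pi * \<bar>of_int m - of_int k\<bar> \<ge> pi" by (simp add: mult_left_le)
    have "x - pi * of_int m = (x - pi * of_int k) - pi * (of_int m - of_int k)" by (simp add: algebra_simps)
    moreover have "\<bar>pi * (of_int m - of_int k)\<bar> = pi * \<bar>of_int m - of_int k\<bar>" by (simp add: abs_mult)
    ultimately have "\<bar>x - pi * of_int m\<bar> \<ge> pi * \<bar>of_int m - of_int k\<bar> - \<bar>x - pi * of_int k\<bar>"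
      by linarith
    then have "hh x \<ge> \<bar>x - pi * of_int k\<bar>" using c assms hm by linarith
    then show ?thesis using hh_min[of x k] by linarith
  qed
qed

lemma hh_ex: "\<exists>k::int. hh x = \<bar>x - pi * of_int k\<bar>"
  by (auto simp: hh_def)

lemma hh_lip: "\<bar>hh x - hh y\<bar> \<le> \<bar>x - y\<bar>"
proof -
  have "hh x \<le> \<bar>x - y\<bar> + hh y" for x y
  proof -
    obtain k where k: "hh y = \<bar>y - pi * of_int k\<bar>" using hh_ex by blast
    have "hh x \<le> \<bar>x - pi * of_int k\<bar>" by (rule hh_min)
    also have "\<dots> \<le> \<bar>x - y\<bar> + \<bar>y - pi * of_int k\<bar>" by linarith
    finally show ?thesis using k by simp
  qed
  from this[of x y] this[of y x] show ?thesis by linarith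
qed

lemma hh_sin: "(sin (hh x))\<^sup>2 = (sin x)\<^sup>2"
proof -
  obtain k where k: "hh x = \<bar>x - pi * of_int k\<bar>" using hh_ex by blast
  have s0: "sin (pi * of_int k) = 0" using sin_times_pi_eq_0[of "of_int k"] by (simp add: mult.commute)
  have c1: "(cos (pi * of_int k))\<^sup>2 = 1" using s0 sin_cos_squared_add[of "pi * of_int k"] by simp
  have "(sin (hh x))\<^sup>2 = (sin (x - pi * of_int k))\<^sup>2" unfolding k
    using sin_minus[of "x - pi * of_int k"] by (simp only: abs_if) (simp add: minus_diff_eq)
  also have "\<dots> = (sin x)\<^sup>2 * (cos (pi * of_int k))\<^sup>2" by (simp add: sin_diff s0 power_mult_distrib)
  finally show ?thesis using c1 by simp
qed

lemma hh_cont: "continuous_on UNIV hh"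
  unfolding continuous_on_iff
  by (metis dist_real_def hh_lip le_less_trans)

lemma hh_zero_local: assumes "hh x0 = 0" "\<bar>x - x0\<bar> \<le> pi/2" shows "hh x = \<bar>x - x0\<bar>"
proof -
  obtain k where k: "hh x0 = \<bar>x0 - pi * of_int k\<bar>" using hh_ex by blast
  then have "x0 = pi * of_int k" using assms by simp
  then show ?thesis using hh_eq[of x k] assms by simp
qed

lemma hh_top_local: assumes "hh x0 = pi/2" "\<bar>x - x0\<bar> \<le> pi/2" shows "hh x = pi/2 - \<bar>x - x0\<bar>"
proof -
  obtain k where k: "hh x0 = \<bar>x0 - pi * of_int k\<bar>" using hh_ex by blast
  then have "\<bar>x0 - pi * of_int k\<bar> = pi/2" using assms by simp
  then have "x0 = pi * of_int k + pi/2 \<or> x0 = pi * of_int k - pi/2" by arith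
  then show ?thesis
  proof
    assume e: "x0 = pi * of_int k + pi/2"
    show ?thesis
    proof (cases "x \<le> x0")
      case True
      then have "\<bar>x - pi * of_int k\<bar> \<le> pi/2" using e assms by auto
      then show ?thesis using hh_eq[of x k] e True assms by auto
    next
      case False
      then have "\<bar>x - pi * of_int (k+1)\<bar> \<le> pi/2" using e assms by (auto simp: algebra_simps)
      then show ?thesis using hh_eq[of x "k+1"] e False assms by (auto simp: algebra_simps)
    qed
  next
    assume e: "x0 = pi * of_int k - pi/2"
    show ?thesis
    proof (cases "x \<ge> x0")
      case True
      then have "\<bar>x - pi * of_int k\<bar> \<le> pi/2" using e assms by auto
      then show ?thesis using hh_eq[of x k] e True assms by auto
    next
      case False
      then have "\<bar>x - pi * of_int (k-1)\<bar> \<le> pi/2" using e assms by (auto simp: algebra_simps)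
      then show ?thesis using hh_eq[of x "k-1"] e False assms by (auto simp: algebra_simps)
    qed
  qed
qed

lemma hh_mid_local: assumes "0 < hh x0" "hh x0 < pi/2"
  shows "\<exists>e>0. \<exists>s c. s\<^sup>2 = (1::real) \<and> (\<forall>x. \<bar>x - x0\<bar> < e \<longrightarrow> hh x = s * x + c)"
proof -
  obtain k where k: "hh x0 = \<bar>x0 - pi * of_int k\<bar>" using hh_ex by blast
  define e where "e = min (hh x0) (pi/2 - hh x0)"
  have e: "e > 0" using assms by (simp add: e_def)
  show ?thesis
  proof (cases "x0 - pi * of_int k \<ge> 0")
    case True
    have "\<forall>x. \<bar>x - x0\<bar> < e \<longrightarrow> hh x = 1 * x + (- pi * of_int k)"
    proof (intro allI impI)
      fix x assume x: "\<bar>x - x0\<bar> < e"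
      have "\<bar>x - pi * of_int k\<bar> \<le> pi/2" "x - pi * of_int k \<ge> 0" using x True k unfolding e_def by auto
      then show "hh x = 1 * x + (- pi * of_int k)" using hh_eq[of x k] by simp
    qed
    then show ?thesis using e by (intro exI[of _ e] conjI exI[of _ "1::real"] exI[of _ "- pi * of_int k"]; simp)
  next
    case False
    have "\<forall>x. \<bar>x - x0\<bar> < e \<longrightarrow> hh x = (-1) * x + (pi * of_int k)"
    proof (intro allI impI)
      fix x assume x: "\<bar>x - x0\<bar> < e"
      have "\<bar>x - pi * of_int k\<bar> \<le> pi/2" "x - pi * of_int k \<le> 0" using x False k unfolding e_def by auto
      then show "hh x = (-1) * x + (pi * of_int k)" using hh_eq[of x k] by simp
    qed
    then show ?thesis using e by (intro exI[of _ e] conjI exI[of _ "-1::real"] exI[of _ "pi * of_int k"]; simp)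
  qed
qed



lemma cont_ev:
  fixes f :: "real \<Rightarrow> real"
  assumes "isCont f r" "e > 0" shows "eventually (\<lambda>y. \<bar>f y - f r\<bar> < e) (nhds r)"
proof -
  have "eventually (\<lambda>y. dist (f y) (f r) < e) (at r)"
    using assms unfolding isCont_def tendsto_iff by blast
  then have "eventually (\<lambda>y. y \<noteq> r \<longrightarrow> y \<in> UNIV \<longrightarrow> dist (f y) (f r) < e) (nhds r)"
    by (simp add: eventually_at_filter)
  then show ?thesis by eventually_elim (use assms in \<open>auto simp: dist_real_def\<close>)
qed

lemma deriv_eq_nd:
  assumes "\<not>(\<exists>D. DERIV F r :> D)" "\<not>(\<exists>D. DERIV G r :> D)"
  shows "deriv F r = deriv G r"
proof -
  have "(\<lambda>D. DERIV F r :> D) = (\<lambda>D. DERIV G r :> D)" using assms by auto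
  then show ?thesis unfolding deriv_def by simp
qed

lemma deriv_compare0:
  fixes F G :: "real \<Rightarrow> real"
  assumes "DERIV G r :> 0" "eventually (\<lambda>y. \<bar>F y - F r\<bar> \<le> \<bar>G y - G r\<bar>) (nhds r)"
  shows "DERIV F r :> 0"
proof -
  have g: "((\<lambda>y. (G y - G r) / (y - r)) \<longlongrightarrow> 0) (at r)"
    using assms(1) by (simp add: has_field_derivative_iff)
  have g2: "((\<lambda>y. \<bar>(G y - G r) / (y - r)\<bar>) \<longlongrightarrow> 0) (at r)" by (rule tendsto_rabs_zero[OF g])
  have ev: "eventually (\<lambda>y. y \<noteq> r \<longrightarrow> y \<in> UNIV \<longrightarrow> \<bar>F y - F r\<bar> \<le> \<bar>G y - G r\<bar>) (nhds r)"
    using assms(2) by eventually_elim auto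
  have "eventually (\<lambda>y. norm ((F y - F r) / (y - r)) \<le> \<bar>(G y - G r) / (y - r)\<bar>) (at r)"
    using ev unfolding eventually_at_filter[symmetric]
    by eventually_elim (simp add: abs_divide divide_right_mono)
  then have "((\<lambda>y. (F y - F r) / (y - r)) \<longlongrightarrow> 0) (at r)"
    by (rule Lim_null_comparison[OF _ g2])
  then show ?thesis by (simp add: has_field_derivative_iff)
qed

definition corner :: "real \<Rightarrow> bool" where "corner u \<longleftrightarrow> hh u = 0 \<or> hh u = pi/2"

lemma corner_sep: assumes "corner u" "corner v" "\<bar>u - v\<bar> < pi/2" shows "u = v"
proof -
  have a: "\<bar>u - v\<bar> \<le> pi/2" using assms by simp
  from assms(2) show ?thesis unfolding corner_def
  proof
    assume "hh v = 0"
    then have "hh u = \<bar>u - v\<bar>" using hh_zero_local a by blast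
    then show ?thesis using assms(1,3) unfolding corner_def by auto
  next
    assume "hh v = pi/2"
    then have "hh u = pi/2 - \<bar>u - v\<bar>" using hh_top_local a by blast
    then show ?thesis using assms(1,3) unfolding corner_def by auto
  qed
qed

lemma deriv_sq:
  fixes f :: "real \<Rightarrow> real"
  assumes c: "isCont f r"
  shows "(deriv (\<lambda>s. hh (f s)) r)\<^sup>2 = (deriv f r)\<^sup>2 \<or> (corner (f r) \<and> (\<exists>D. D \<noteq> 0 \<and> DERIV f r :> D))"
proof (cases "corner (f r)")
  case False
  then have m: "0 < hh (f r)" "hh (f r) < pi/2" using hh_range[of "f r"] unfolding corner_def by auto
  obtain e s cc where e: "e > 0" "s\<^sup>2 = (1::real)" "\<forall>x. \<bar>x - f r\<bar> < e \<longrightarrow> hh x = s * x + cc"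
    using hh_mid_local[OF m] by blast
  have ev: "eventually (\<lambda>y. hh (f y) = s * f y + cc) (nhds r)"
    using cont_ev[OF c e(1)] by eventually_elim (use e in auto)
  have eqv: "DERIV (\<lambda>y. hh (f y)) r :> D \<longleftrightarrow> DERIV (\<lambda>y. s * f y + cc) r :> D" for D
    by (rule DERIV_cong_ev[OF refl ev refl])
  have ss: "s * s = 1" using e(2) by (simp add: power2_eq_square)
  show ?thesis
  proof (cases "\<exists>D. DERIV f r :> D")
    case True
    then obtain D where D: "DERIV f r :> D" by blast
    have "DERIV (\<lambda>y. s * f y + cc) r :> s * D" by (auto intro!: derivative_eq_intros D)
    then have "DERIV (\<lambda>y. hh (f y)) r :> s * D" using eqv by blast
    then have "deriv (\<lambda>y. hh (f y)) r = s * D" by (rule DERIV_imp_deriv)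
    moreover have "deriv f r = D" using D by (rule DERIV_imp_deriv)
    ultimately show ?thesis using e(2) by (simp add: power_mult_distrib)
  next
    case nd: False
    have "\<not>(\<exists>D. DERIV (\<lambda>y. hh (f y)) r :> D)"
    proof
      assume "\<exists>D. DERIV (\<lambda>y. hh (f y)) r :> D"
      then obtain D where "DERIV (\<lambda>y. s * f y + cc) r :> D" using eqv by blast
      then have "DERIV (\<lambda>y. s * (s * f y + cc) - s * cc) r :> s * D - 0"
        by (intro DERIV_diff DERIV_cmult DERIV_const)
      moreover have "(\<lambda>y. s * (s * f y + cc) - s * cc) = f" using ss by (auto simp: algebra_simps)
      ultimately show False using nd by auto
    qed
    then show ?thesis using deriv_eq_nd nd by metis
  qed
next
  case True
  have p2: "pi/2 > 0" by simp
  have ev: "eventually (\<lambda>y. \<bar>hh (f y) - hh (f r)\<bar> = \<bar>f y - f r\<bar>) (nhds r)"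
    using cont_ev[OF c p2]
  proof eventually_elim
    case (elim y)
    then have a: "\<bar>f y - f r\<bar> \<le> pi/2" by simp
    from True show ?case unfolding corner_def
    proof
      assume "hh (f r) = 0" then show ?thesis using hh_zero_local[OF _ a] by simp
    next
      assume "hh (f r) = pi/2" then show ?thesis using hh_top_local[OF _ a] by simp
    qed
  qed
  have ev1: "eventually (\<lambda>y. \<bar>hh (f y) - hh (f r)\<bar> \<le> \<bar>f y - f r\<bar>) (nhds r)"
    using ev by eventually_elim simp
  have ev2: "eventually (\<lambda>y. \<bar>f y - f r\<bar> \<le> \<bar>hh (f y) - hh (f r)\<bar>) (nhds r)"
    using ev by eventually_elim simp
  show ?thesis
  proof (cases "\<exists>D. DERIV f r :> D")
    case True
    then obtain D where D: "DERIV f r :> D" by blast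
    show ?thesis
    proof (cases "D = 0")
      case True
      then have "DERIV (\<lambda>y. hh (f y)) r :> 0" using deriv_compare0[OF _ ev1] D by simp
      then show ?thesis using D True DERIV_imp_deriv by metis
    next
      case False then show ?thesis using D \<open>corner (f r)\<close> by blast
    qed
  next
    case nd: False
    have "\<not>(\<exists>D. DERIV (\<lambda>y. hh (f y)) r :> D)"
    proof
      assume "\<exists>D. DERIV (\<lambda>y. hh (f y)) r :> D"
      then obtain D where D: "DERIV (\<lambda>y. hh (f y)) r :> D" by blast
      have "D = 0"
        using True unfolding corner_def
      proof
        assume "hh (f r) = 0"
        then show "D = 0" using DERIV_local_min[OF D zero_less_one] hh_range by simp
      next
        assume "hh (f r) = pi/2"
        then have "\<forall>y. \<bar>r - y\<bar> < 1 \<longrightarrow> hh (f y) \<le> hh (f r)" using hh_range(2) by (metis)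
        then show "D = 0" using DERIV_local_max[OF D zero_less_one] by blast
      qed
      then have "DERIV f r :> 0" using deriv_compare0[OF _ ev2] D by simp
      then show False using nd by blast
    qed
    then show ?thesis using deriv_eq_nd nd by metis
  qed
qed

lemma discrete_countable:
  fixes S :: "real set"
  assumes "\<forall>x\<in>S. \<exists>e>0. \<forall>y\<in>S. \<bar>y - x\<bar> < e \<longrightarrow> y = x"
  shows "countable S"
proof -
  obtain e where e: "\<And>x. x \<in> S \<Longrightarrow> e x > 0 \<and> (\<forall>y\<in>S. \<bar>y - x\<bar> < e x \<longrightarrow> y = x)"
    using assms by metis
  have "\<exists>q\<in>\<rat>. x < q \<and> q < x + e x" if "x \<in> S" for x
    using Rats_dense_in_real[of x "x + e x"] e[OF that] by auto
  then obtain q where q: "\<And>x. x \<in> S \<Longrightarrow> q x \<in> \<rat> \<and> x < q x \<and> q x < x + e x" by metis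
  have inj: "inj_on q S"
  proof (rule inj_onI)
    fix x y assume xy: "x \<in> S" "y \<in> S" "q x = q y"
    show "x = y"
    proof (rule ccontr)
      assume ne: "x \<noteq> y"
      show False
      proof (cases "x < y")
        case True
        then have "\<bar>y - x\<bar> < e x" using q[OF xy(1)] q[OF xy(2)] xy(3) by auto
        then show False using e[OF xy(1)] xy(2) ne by auto
      next
        case False
        then have "\<bar>x - y\<bar> < e y" using q[OF xy(1)] q[OF xy(2)] xy(3) ne by auto
        then show False using e[OF xy(2)] xy(1) ne by auto
      qed
    qed
  qed
  have "q ` S \<subseteq> \<rat>" using q by auto
  then have "countable (q ` S)" using countable_rat countable_subset by blast
  then show ?thesis using countable_image_inj_on inj by blast
qed

lemma bad_countable:
  fixes f :: "real \<Rightarrow> real"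
  shows "countable {r. corner (f r) \<and> (\<exists>D. D \<noteq> 0 \<and> DERIV f r :> D)}" (is "countable ?B")
proof (rule discrete_countable, intro ballI)
  fix x assume "x \<in> ?B"
  then obtain D where x: "corner (f x)" "D \<noteq> 0" "DERIV f x :> D" by blast
  have t: "((\<lambda>y. (f y - f x) / (y - x)) \<longlongrightarrow> D) (at x)" using x(3) by (simp add: has_field_derivative_iff)
  have ev1: "eventually (\<lambda>y. (f y - f x) / (y - x) \<noteq> 0) (at x)"
    using tendsto_imp_eventually_ne[OF t x(2)] .
  have "eventually (\<lambda>y. \<bar>f y - f x\<bar> < pi/2) (nhds x)"
    using cont_ev[OF DERIV_isCont[OF x(3)], of "pi/2"] by simp
  then have ev2: "eventually (\<lambda>y. \<bar>f y - f x\<bar> < pi/2) (at x)"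
    unfolding eventually_at_filter by eventually_elim auto
  have "eventually (\<lambda>y. (f y - f x) / (y - x) \<noteq> 0 \<and> \<bar>f y - f x\<bar> < pi/2) (at x)"
    using ev1 ev2 by (rule eventually_conj)
  then obtain d where d: "d > 0" "\<And>y. y \<noteq> x \<Longrightarrow> dist y x < d \<Longrightarrow> (f y - f x) / (y - x) \<noteq> 0 \<and> \<bar>f y - f x\<bar> < pi/2"
    unfolding eventually_at by auto
  show "\<exists>e>0. \<forall>y\<in>?B. \<bar>y - x\<bar> < e \<longrightarrow> y = x"
  proof (intro exI[of _ d] conjI ballI impI)
    fix y assume y: "y \<in> ?B" "\<bar>y - x\<bar> < d"
    show "y = x"
    proof (rule ccontr)
      assume ne: "y \<noteq> x"
      then have dd: "(f y - f x) / (y - x) \<noteq> 0" "\<bar>f y - f x\<bar> < pi/2" using d(2)[OF ne] y(2) by (auto simp: dist_real_def)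
      have "f y = f x" using corner_sep[OF _ x(1) dd(2)] y(1) by blast
      then show False using dd(1) by simp
    qed
  qed (use d in auto)
qed



lemma ex_forward_lt:
  fixes A B :: "nat \<Rightarrow> (nat \<Rightarrow> real) \<Rightarrow> (nat \<Rightarrow> real) \<Rightarrow> real"
  assumes "\<exists>\<delta>>0. \<forall>n x y. P \<delta> n x y \<longrightarrow> A n x y < \<epsilon>" "\<And>n x y. B n x y \<le> A n x y"
  shows "\<exists>\<delta>>0. \<forall>n x y. P \<delta> n x y \<longrightarrow> B n x y < \<epsilon>"
proof -
  from assms(1) obtain \<delta> where d: "\<delta> > 0" "\<forall>n x y. P \<delta> n x y \<longrightarrow> A n x y < \<epsilon>" by blast
  show ?thesis
  proof (intro exI[of _ \<delta>] conjI allI impI)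
    fix n x y assume "P \<delta> n x y"
    then have "A n x y < \<epsilon>" using d(2) by blast
    then show "B n x y < \<epsilon>" using assms(2)[of n x y] by linarith
  qed (rule d(1))
qed

lemma abs_cont_comp:
  assumes "abs_cont_on S u" "\<And>x y. \<bar>h x - h y\<bar> \<le> \<bar>x - y\<bar>"
  shows "abs_cont_on S (\<lambda>s. h (u s))"
  unfolding abs_cont_on_def
proof (intro allI impI)
  fix \<epsilon> :: real assume e: "\<epsilon> > 0"
  show "\<exists>\<delta>>0. \<forall>(n::nat) (x::nat \<Rightarrow> real) (y::nat \<Rightarrow> real).
        (\<forall>i<n. x i \<le> y i \<and> {x i..y i} \<subseteq> S) \<and>
        (\<forall>i<n. \<forall>j<n. i \<noteq> j \<longrightarrow> {x i<..<y i} \<inter> {x j<..<y j} = {}) \<and>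
        (\<Sum>i<n. y i - x i) < \<delta>
        \<longrightarrow> (\<Sum>i<n. \<bar>h (u (y i)) - h (u (x i))\<bar>) < \<epsilon>"
    by (rule ex_forward_lt[OF assms(1)[unfolded abs_cont_on_def, rule_format, OF e]])
       (rule sum_mono, rule assms(2))
qed



lemma or_not_r: "P \<or> Q \<Longrightarrow> \<not> Q \<Longrightarrow> P" by blast

lemma E1_cong: "(deriv ft r)\<^sup>2 = (deriv f r)\<^sup>2 \<Longrightarrow> (sin (ft r))\<^sup>2 = (sin (f r))\<^sup>2 \<Longrightarrow> E1dens \<kappa> a ft r = E1dens \<kappa> a f r"
  unfolding E1dens_def by (simp only:)

lemma sing_leb: "emeasure lebesgue {x::real} = 0" "{x::real} \<in> sets lebesgue"
  by simp_all

theorem lemma3p1: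
  fixes \<kappa> \<omega> q :: real and a f g :: "real \<Rightarrow> real"
  assumes "\<kappa> > 0" and "pi/2 < \<omega>" and "\<omega> < pi" and "q > 0"
    and "constrained \<kappa> \<omega> q a f g"
  shows "\<exists>ft :: real \<Rightarrow> real. (\<forall>r\<ge>0. 0 \<le> ft r \<and> ft r \<le> pi/2) \<and>
           constrained \<kappa> \<omega> q a ft g \<and> Lfun \<kappa> a ft g \<le> Lfun \<kappa> a f g"
proof -
  define ft where "ft = (\<lambda>s. hh (f s))"
  define B where "B = {r. corner (f r) \<and> (\<exists>D. D \<noteq> 0 \<and> DERIV f r :> D)}"
  have Bc: "countable B" unfolding B_def by (rule bad_countable)
  have adm: "admissible \<kappa> \<omega> q a f g" and cons: "\<forall>G. loc_abs_cont G \<and> (G \<longlongrightarrow> 0) at_top \<and> E2fun a G < \<infinity> \<longrightarrow>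
        (LINT r:{0<..}|lebesgue. r\<^sup>2 * deriv g r * deriv G r + 2 * (a r)\<^sup>2 * g r * G r) = 0"
    using assms(5) unfolding constrained_def by (rule conjunct1, rule conjunct2)
  have ca: "continuous_on {0..} a" and cf: "continuous_on {0..} f" and cg: "continuous_on {0..} g"
    and la: "loc_abs_cont a" and lf: "loc_abs_cont f" and lg: "loc_abs_cont g"
    and a0: "a 0 = 1" and alim: "(a \<longlongrightarrow> 0) at_top" and f0: "f 0 = 0" and flim: "(f \<longlongrightarrow> pi - \<omega>) at_top"
    and glim: "(g \<longlongrightarrow> q) at_top" and Ef: "Efun \<kappa> a f g < \<infinity>"
    using adm unfolding admissible_def by simp_all
  have pw: "E1dens \<kappa> a ft r = E1dens \<kappa> a f r" if r: "r > 0" "r \<notin> B" for r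
  proof -
    have "isCont f r" using continuous_on_interior[OF cf, where x=r] r by simp
    have nb: "\<not>(corner (f r) \<and> (\<exists>D. D \<noteq> 0 \<and> DERIV f r :> D))" using r(2) unfolding B_def by simp
    have "(deriv (\<lambda>s. hh (f s)) r)\<^sup>2 = (deriv f r)\<^sup>2" using deriv_sq[where f=f and r=r, OF \<open>isCont f r\<close>] nb by (rule or_not_r)
    then have "(deriv ft r)\<^sup>2 = (deriv f r)\<^sup>2" unfolding ft_def .
    moreover have "(sin (ft r))\<^sup>2 = (sin (f r))\<^sup>2" unfolding ft_def by (rule hh_sin)
    ultimately show ?thesis by (rule E1_cong)
  qed
  have AEB: "AE x in lebesgue. x \<notin> B"
    by (rule AE_discrete_difference[OF Bc]) simp_all
  have Eeq: "Efun \<kappa> a ft g = Efun \<kappa> a f g"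
    unfolding Efun_def
    by (rule nn_integral_cong_AE) (use AEB in \<open>eventually_elim, auto simp: pw indicator_def\<close>)
  have Leq: "Lfun \<kappa> a ft g = Lfun \<kappa> a f g"
    unfolding Lfun_def set_lebesgue_integral_def
    by (rule integral_discrete_difference[OF Bc]) (auto simp: pw indicator_def)
  have h0: "hh 0 = 0" using hh_eq[of 0 0] by simp
  have hpo: "hh (pi - \<omega>) = pi - \<omega>" using hh_eq[of "pi - \<omega>" 0] assms(2,3) by simp
  have cft: "continuous_on {0..} ft"
    unfolding ft_def by (rule continuous_on_compose2[OF hh_cont cf]) auto
  have lim: "(ft \<longlongrightarrow> pi - \<omega>) at_top"
  proof -
    have "isCont hh (pi - \<omega>)" using hh_cont by (simp add: continuous_on_eq_continuous_at)
    from isCont_tendsto_compose[OF this flim] show ?thesis unfolding ft_def hpo .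
  qed
  have lac: "loc_abs_cont ft"
    unfolding loc_abs_cont_def
  proof (intro allI impI)
    fix c d :: real assume cd: "0 < c" "c \<le> d"
    have "abs_cont_on {c..d} f" using lf[unfolded loc_abs_cont_def, rule_format, OF cd] .
    then show "abs_cont_on {c..d} ft" unfolding ft_def by (rule abs_cont_comp) (rule hh_lip)
  qed
  have ft0: "ft 0 = 0" unfolding ft_def using f0 h0 by simp
  have "admissible \<kappa> \<omega> q a ft g"
    unfolding admissible_def
  proof (intro conjI)
    show "Efun \<kappa> a ft g < \<infinity>" using Eeq Ef by simp
  qed (fact ca cft cg la lac lg a0 alim ft0 lim glim)+
  moreover have "\<forall>G. loc_abs_cont G \<and> (G \<longlongrightarrow> 0) at_top \<and> E2fun a G < \<infinity> \<longrightarrow>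
        (LINT r:{0<..}|lebesgue. r\<^sup>2 * deriv g r * deriv G r + 2 * (a r)\<^sup>2 * g r * G r) = 0"
    by (rule cons)
  ultimately have "constrained \<kappa> \<omega> q a ft g"
    unfolding constrained_def by (intro conjI)
  moreover have "\<forall>r\<ge>0. 0 \<le> ft r \<and> ft r \<le> pi/2" unfolding ft_def using hh_range by auto
  ultimately show ?thesis using Leq by auto
qed

end
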